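(* For every $\sigma\in\mathrm{NC}_n$, the set $\mathrm{Red}_{\mathrm{NC}}(\sigma)$ of noncrossing reduced words of $\sigma$ is a commutation class in $\mathrm{Red}(\sigma)$; that is, $\mathrm{Red}_{\mathrm{NC}}(\sigma)\neq\emptyset$, and a word lies in $\mathrm{Red}_{\mathrm{NC}}(\sigma)$ if and only if it can be obtained from some (equivalently any) element of $\mathrm{Red}_{\mathrm{NC}}(\sigma)$ by a finite sequence of commutation moves $\mathbf a\,ij\,\mathbf b\leftrightarrow\mathbf a\,ji\,\mathbf b$ with $|i-j|>1$.
   Context: $\mathrm{Red}(\sigma)$ is the set of reduced words $(i_1,\dots,i_\ell)$, $\ell=\ell(\sigma)$, with $\sigma=s_{i_1}\cdots s_{i_\ell}$, where $s_i=(i,i+1)$. A set partition of $[n]$ is noncrossing if there are no distinct blocks $P,Q$ with $a,b\in P$, $c,d\in Q$, $a<c<b<d$; to it associate $\sigma\in S_n$ acting on each block $\{a_1<\dots<a_p\}$ by $\sigma(a_j)=a_{j-1}$ ($j\ge2$), $\sigma(a_1)=a_p$; $\mathrm{NC}_n$ is the set of these permutations. For $\sigma\in\mathrm{NC}_n$, $i$ is a noncrossing descent if $\sigma s_i\in\mathrm{NC}_n$ and $\ell(\sigma s_i)<\ell(\sigma)$. A noncrossing reduced word of $\sigma$ is a word $(i_1,\dots,i_\ell)$ with $\sigma=s_{i_1}\cdots s_{i_\ell}$ such that for every $1\le k\le\ell$, $s_{i_1}\cdots s_{i_k}\in\mathrm{NC}_n$ and $i_k$ is a noncrossing descent of $s_{i_1}\cdots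 s_{i_k}$. *)

theory Defs
  imports Main "HOL-Combinatorics.Transposition" "HOL-Library.Disjoint_Sets"
begin

text \<open>Permutations of [n] = {1..n} are functions nat => nat permuting {1..n}
  (fixing everything else). Products are function composition.\<close>

definition sref :: "nat \<Rightarrow> nat \<Rightarrow> nat" where
  "sref i = Transposition.transpose i (Suc i)"

fun word_perm :: "nat list \<Rightarrow> nat \<Rightarrow> nat" where
  "word_perm [] = id"
| "word_perm (i # w) = sref i \<circ> word_perm w"

text \<open>Coxeter length = number of inversions.\<close>
definition perm_len :: "nat \<Rightarrow> (nat \<Rightarrow> nat) \<Rightarrow> nat" where
  "perm_len n \<sigma> = card {(i, j). 1 \<le> i \<and> i < j \<and> j \<le> n \<and> \<sigma> j < \<sigma> i}"

definition Red :: "nat \<Rightarrow> (nat \<Rightarrow> nat) \<Rightarrow> nat list set" where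
  "Red n \<sigma> = {w. set w \<subseteq> {1..<n} \<and> word_perm w = \<sigma> \<and> length w = perm_len n \<sigma>}"

definition noncrossing :: "nat set set \<Rightarrow> bool" where
  "noncrossing P \<longleftrightarrow> \<not> (\<exists>B\<in>P. \<exists>C\<in>P. B \<noteq> C \<and>
      (\<exists>a b c d. a \<in> B \<and> b \<in> B \<and> c \<in> C \<and> d \<in> C \<and> a < c \<and> c < b \<and> b < d))"

definition part_perm :: "nat set set \<Rightarrow> nat \<Rightarrow> nat" where
  "part_perm P x = (if \<exists>B\<in>P. x \<in> B then
      (let B = (THE B. B \<in> P \<and> x \<in> B) in
         if x = Min B then Max B else Max {y \<in> B. y < x})
    else x)"

definition NC :: "nat \<Rightarrow> (nat \<Rightarrow> nat) set" where
  "NC n = {part_perm P | P. partition_on {1..n} P \<and> noncrossing P}"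

definition nc_descent :: "nat \<Rightarrow> (nat \<Rightarrow> nat) \<Rightarrow> nat \<Rightarrow> bool" where
  "nc_descent n \<sigma> i \<longleftrightarrow> \<sigma> \<circ> sref i \<in> NC n \<and> perm_len n (\<sigma> \<circ> sref i) < perm_len n \<sigma>"

definition RedNC :: "nat \<Rightarrow> (nat \<Rightarrow> nat) \<Rightarrow> nat list set" where
  "RedNC n \<sigma> = {w \<in> Red n \<sigma>. \<forall>k. 1 \<le> k \<and> k \<le> length w \<longrightarrow>
       word_perm (take k w) \<in> NC n \<and> nc_descent n (word_perm (take k w)) (w ! (k - 1))}"

definition comm_move :: "nat list \<Rightarrow> nat list \<Rightarrow> bool" where
  "comm_move u v \<longleftrightarrow> (\<exists>a b i j. u = a @ [i, j] @ b \<and> v = a @ [j, i] @ b \<and> (i + 1 < j \<or> j + 1 < i))"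

end

theory Submission
  imports Defs
begin

definition pf :: "nat set \<Rightarrow> nat \<Rightarrow> nat" where
  "pf B x = (if x = Min B then Max B else Max {y \<in> B. y < x})"

lemma pp_eq:
  assumes "partition_on A P" "B \<in> P" "x \<in> B"
  shows "part_perm P x = pf B x"
proof -
  have "(THE B. B \<in> P \<and> x \<in> B) = B"
    using assms by (intro the_equality) (auto simp: partition_on_def disjoint_def)
  then show ?thesis using assms unfolding part_perm_def pf_def by (auto simp: Let_def)
qed

lemma pp_out:
  assumes "x \<notin> \<Union>P"
  shows "part_perm P x = x"
  using assms unfolding part_perm_def by auto

lemma pf_in:
  assumes "finite B" "x \<in> B"
  shows "pf B x \<in> B"
proof -
  have "B \<noteq> {}" using assms by auto
  show ?thesis
  proof (cases "x = Min B")
    case True then show ?thesis using assms Max_in[of B] \<open>B \<noteq> {}\<close> by (simp add: pf_def)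
  next
    case False
    then have "Min B < x" using assms by (metis Min_le le_neq_implies_less)
    then have "{y \<in> B. y < x} \<noteq> {}" using assms Min_in[of B] by fastforce
    then show ?thesis using False assms Max_in[of "{y \<in> B. y < x}"] by (simp add: pf_def)
  qed
qed

lemma pf_notmin:
  assumes "finite B" "x \<in> B" "x \<noteq> Min B"
  shows "pf B x < x" "\<And>y. y \<in> B \<Longrightarrow> y < x \<Longrightarrow> y \<le> pf B x"
proof -
  have "Min B < x" using assms by (metis Min_le le_neq_implies_less)
  then have ne: "{y \<in> B. y < x} \<noteq> {}" using assms Min_in[of B] by fastforce
  show "pf B x < x" using assms Max_in[OF _ ne] by (simp add: pf_def)
  show "\<And>y. y \<in> B \<Longrightarrow> y < x \<Longrightarrow> y \<le> pf B x" using assms by (simp add: pf_def)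
qed

lemma pf_min:
  assumes "finite B" "x \<in> B" "x = Min B"
  shows "pf B x = Max B" "x \<le> pf B x"
  using assms by (auto simp: pf_def)

lemma pf_eq_iff:
  assumes "finite B" "x \<in> B" "y \<in> B" "x < y" "\<And>z. z \<in> B \<Longrightarrow> x < z \<Longrightarrow> z < y \<Longrightarrow> False"
  shows "pf B y = x"
proof -
  have "y \<noteq> Min B" using assms by (metis Min_le not_le)
  then have "pf B y = Max {z \<in> B. z < y}" by (simp add: pf_def)
  also have "\<dots> = x"
    using assms by (intro Max_eqI) (auto simp: not_less[symmetric])
  finally show ?thesis .
qed

definition Inv :: "nat \<Rightarrow> (nat \<Rightarrow> nat) \<Rightarrow> (nat \<times> nat) set" where
  "Inv n \<sigma> = {(i, j). 1 \<le> i \<and> i < j \<and> j \<le> n \<and> \<sigma> j < \<sigma> i}"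

lemma perm_len_Inv: "perm_len n \<sigma> = card (Inv n \<sigma>)"
  by (simp add: perm_len_def Inv_def)

lemma Inv_fin: "finite (Inv n \<sigma>)"
proof -
  have "Inv n \<sigma> \<subseteq> {1..n} \<times> {1..n}" by (auto simp: Inv_def)
  then show ?thesis by (rule finite_subset) auto
qed

lemma LL:
  assumes "1 \<le> i" "Suc i \<le> n" "\<sigma> (Suc i) < \<sigma> i"
  shows "perm_len n (\<sigma> \<circ> sref i) + 1 = perm_len n \<sigma>"
proof -
  define t where "t = sref i"
  define g where "g = (\<lambda>(p::nat, q::nat). (t p, t q))"
  have gg: "g (g x) = x" for x by (cases x) (simp add: g_def t_def sref_def)
  have A: "g x \<in> Inv n (\<sigma> \<circ> t)" if "x \<in> Inv n \<sigma> - {(i, Suc i)}" for x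
    using that assms by (cases x) (auto simp: g_def t_def sref_def transpose_def Inv_def split: if_splits)
  have B: "g x \<in> Inv n \<sigma> - {(i, Suc i)}" if "x \<in> Inv n (\<sigma> \<circ> t)" for x
    using that assms by (cases x) (auto simp: g_def t_def sref_def transpose_def Inv_def split: if_splits)
  have eq: "Inv n (\<sigma> \<circ> t) = g ` (Inv n \<sigma> - {(i, Suc i)})"
  proof
    show "Inv n (\<sigma> \<circ> t) \<subseteq> g ` (Inv n \<sigma> - {(i, Suc i)})"
    proof
      fix x assume "x \<in> Inv n (\<sigma> \<circ> t)"
      then have "g x \<in> Inv n \<sigma> - {(i, Suc i)}" by (rule B)
      then show "x \<in> g ` (Inv n \<sigma> - {(i, Suc i)})" by (metis gg image_eqI)
    qed
  next
    show "g ` (Inv n \<sigma> - {(i, Suc i)}) \<subseteq> Inv n (\<sigma> \<circ> t)" by (rule image_subsetI, rule A)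
  qed
  have inj: "inj g" by (metis gg injI)
  have "card (Inv n (\<sigma> \<circ> t)) = card (Inv n \<sigma> - {(i, Suc i)})"
    unfolding eq by (rule card_image) (rule inj_on_subset[OF inj], simp)
  moreover have "(i, Suc i) \<in> Inv n \<sigma>" using assms by (simp add: Inv_def)
  ultimately show ?thesis using Inv_fin[of n \<sigma>]
    by (simp add: perm_len_Inv t_def card_Diff_singleton_if) (metis card_0_eq empty_iff Suc_pred neq0_conv)
qed

lemma part_basic:
  fixes n :: nat
  assumes "partition_on {1..n} P" "B \<in> P"
  shows "finite B" "B \<noteq> {}" "B \<subseteq> {1..n}"
proof -
  show "B \<subseteq> {1..n}" using assms by (auto simp: partition_on_def)
  then show "finite B" by (rule finite_subset) simp
  show "B \<noteq> {}" using assms by (auto simp: partition_on_def)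
qed

lemma part_uniq:
  assumes "partition_on A P" "B \<in> P" "C \<in> P" "x \<in> B" "x \<in> C"
  shows "B = C"
  using assms by (auto simp: partition_on_def disjoint_def)

lemma part_ex:
  assumes "partition_on A P" "x \<in> A"
  obtains B where "B \<in> P" "x \<in> B"
  using assms by (auto simp: partition_on_def)

lemma pp_in:
  fixes n :: nat
  assumes "partition_on {1..n} P" "B \<in> P" "x \<in> B"
  shows "part_perm P x \<in> B"
  using pp_eq[OF assms] pf_in[OF part_basic(1)[OF assms(1,2)] assms(3)] by simp

lemma pp_out2:
  fixes n :: nat
  assumes "partition_on {1..n} P" "x \<notin> {1..n}"
  shows "part_perm P x = x"
  using assms pp_out[of x P] by (auto simp: partition_on_def)

definition T :: "(nat \<Rightarrow> nat) \<Rightarrow> nat \<Rightarrow> bool" where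
  "T \<sigma> i \<longleftrightarrow> (\<sigma> (Suc i) = i \<and> i < \<sigma> i) \<or> (\<sigma> i = i \<and> \<sigma> (Suc i) < i)"

lemma sref_other: "x \<noteq> i \<Longrightarrow> x \<noteq> Suc i \<Longrightarrow> sref i x = x"
  by (simp add: sref_def)

lemma T1_nc:
  assumes P: "partition_on {1..n} P" and ncP: "noncrossing P" and s: "\<sigma> = part_perm P"
    and i: "1 \<le> i" "Suc i \<le> n" and t1: "\<sigma> (Suc i) = i" "i < \<sigma> i"
  shows "\<sigma> \<circ> sref i \<in> NC n"
proof -
  obtain B where B: "B \<in> P" "i \<in> B" using part_ex[OF P, of i] i by auto
  obtain C where C: "C \<in> P" "Suc i \<in> C" using part_ex[OF P, of "Suc i"] i by auto
  have finB: "finite B" using part_basic[OF P B(1)] by auto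
  have "i \<in> C" using pp_in[OF P C] s t1 by simp
  then have "C = B" using part_uniq[OF P C(1) B(1)] B by simp
  with C have SB: "Suc i \<in> B" by simp
  have minB: "i = Min B"
  proof (rule ccontr)
    assume "i \<noteq> Min B"
    then have "pf B i < i" using pf_notmin[OF finB B(2)] by simp
    then show False using pp_eq[OF P B] s t1 by simp
  qed
  have imin: "\<And>y. y \<in> B \<Longrightarrow> i \<le> y" using minB finB by simp
  define P' where "P' = insert {i} (insert (B - {i}) (P - {B}))"
  have BiP: "B - {i} \<notin> P - {B}"
  proof
    assume "B - {i} \<in> P - {B}"
    then have "B - {i} = B" using part_uniq[OF P, of "B - {i}" B "Suc i"] SB B by auto
    then show False using B by auto
  qed
  have iP: "{i} \<notin> P - {B}" using part_uniq[OF P, of "{i}" B i] B by auto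
  have P': "partition_on {1..n} P'"
  proof (rule partition_onI)
    show "\<Union>P' = {1..n}" using P B unfolding P'_def partition_on_def by auto
    show "{} \<notin> P'" using P SB unfolding P'_def partition_on_def by auto
    fix p q assume "p \<in> P'" "q \<in> P'" "p \<noteq> q"
    then show "disjnt p q" using P B unfolding P'_def partition_on_def disjoint_def disjnt_def
      by auto
  qed
  have eq: "part_perm P' = \<sigma> \<circ> sref i"
  proof
    fix x
    show "part_perm P' x = (\<sigma> \<circ> sref i) x"
    proof (cases "x \<in> {1..n}")
      case False
      then have "x \<noteq> i" "x \<noteq> Suc i" using i by auto
      then show ?thesis using False pp_out2[OF P' False] pp_out2[OF P False] s
        by (simp add: sref_other)
    next
      case True
      then obtain D where D: "D \<in> P" "x \<in> D" using part_ex[OF P] by blast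
      show ?thesis
      proof (cases "D = B")
        case False
        then have "D \<in> P'" unfolding P'_def using D by auto
        moreover have "x \<noteq> i" "x \<noteq> Suc i" using D B SB False part_uniq[OF P] by metis+
        ultimately show ?thesis using pp_eq[OF P' _ D(2)] pp_eq[OF P D] s by (simp add: sref_other)
      next
        case DB: True
        have B'P: "B - {i} \<in> P'" unfolding P'_def by auto
        have finB': "finite (B - {i})" using finB by simp
        show ?thesis
        proof (cases "x = i")
          case True
          have "{i} \<in> P'" unfolding P'_def by auto
          then show ?thesis using True pp_eq[OF P', of "{i}" i] t1 by (simp add: sref_def pf_def)
        next
          case xi: False
          show ?thesis
          proof (cases "x = Suc i")
            case True
            have "Suc i = Min (B - {i})"
              using imin SB finB by (intro Min_eqI[symmetric]) (auto, metis Suc_leI le_neq_implies_less)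
            then have "pf (B - {i}) (Suc i) = Max (B - {i})" by (simp add: pf_def)
            also have "\<dots> = Max B"
            proof -
              have "Suc i \<le> Max B" using SB finB by simp
              moreover have "Max B \<in> B" using SB finB Max_in[of B] by blast
              ultimately show ?thesis using SB finB by (intro Max_eqI) (auto simp: Suc_le_eq)
            qed
            finally show ?thesis using True pp_eq[OF P' B'P, of "Suc i"] pp_eq[OF P B] minB s SB
              by (simp add: sref_def pf_def)
          next
            case False
            have xB: "x \<in> B" using D DB by simp
            have "x \<noteq> Min B" using minB xi by simp
            then have lt: "pf B x < x" and mx: "\<And>y. y \<in> B \<Longrightarrow> y < x \<Longrightarrow> y \<le> pf B x"
              using pf_notmin[OF finB xB] by auto
            have "Suc i < x" using imin[OF xB] xi False by simp
            then have "Suc i \<le> pf B x" using mx SB by simp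
            have pB: "pf B x \<in> B" using pf_in[OF finB xB] .
            have "pf (B - {i}) x = pf B x"
              apply (rule pf_eq_iff[OF finB'])
              using pB \<open>Suc i \<le> pf B x\<close> xB xi lt mx by (auto simp: not_le[symmetric])
            then show ?thesis using pp_eq[OF P' B'P, of x] pp_eq[OF P B(1) xB] s xi False xB
              by (simp add: sref_other)
          qed
        qed
      qed
    qed
  qed
  have ncP': "noncrossing P'"
    unfolding noncrossing_def
  proof (rule notI, elim bexE exE conjE)
    fix X Y a b c d
    assume X: "X \<in> P'" and Y: "Y \<in> P'" and XY: "X \<noteq> Y" and abcd: "a \<in> X" "b \<in> X" "c \<in> Y" "d \<in> Y" "a < c" "c < b" "b < d"
    define h where "h Z = (if Z = B - {i} then B else Z)" for Z
    have X1: "X \<in> insert (B - {i}) (P - {B})" using X abcd unfolding P'_def by auto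
    have Y1: "Y \<in> insert (B - {i}) (P - {B})" using Y abcd unfolding P'_def by auto
    have hP: "h Z \<in> P" "Z \<subseteq> h Z" if "Z \<in> insert (B - {i}) (P - {B})" for Z
      using that B unfolding h_def by auto
    have "h X \<noteq> h Y" using X1 Y1 XY BiP unfolding h_def by auto
    moreover have "a \<in> h X" "b \<in> h X" "c \<in> h Y" "d \<in> h Y"
      using hP(2)[OF X1] hP(2)[OF Y1] abcd by auto
    ultimately have "\<exists>B\<in>P. \<exists>C\<in>P. B \<noteq> C \<and> (\<exists>a b c d. a \<in> B \<and> b \<in> B \<and> c \<in> C \<and> d \<in> C \<and> a < c \<and> c < b \<and> b < d)"
      using hP(1)[OF X1] hP(1)[OF Y1] abcd(5-7) by (intro bexI[of _ "h X"] bexI[of _ "h Y"]) blast+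
    then show False using ncP unfolding noncrossing_def by blast
  qed
  show ?thesis unfolding NC_def mem_Collect_eq using P' ncP' eq by (intro exI[of _ P']) simp
qed

lemma singleton_block:
  assumes "finite B" "i \<in> B" "pf B i = i"
  shows "B = {i}"
proof -
  have "i = Min B"
  proof (rule ccontr)
    assume "i \<noteq> Min B" then show False using pf_notmin(1)[OF assms(1,2)] assms(3) by simp
  qed
  then have "Max B = i" using assms pf_min by simp
  then show ?thesis using assms \<open>i = Min B\<close>
    by (metis Max_ge Min_le antisym empty_iff insertI1 subsetI subset_antisym singletonD singletonI)
qed

lemma T2_nc:
  assumes P: "partition_on {1..n} P" and ncP: "noncrossing P" and s: "\<sigma> = part_perm P"
    and i: "1 \<le> i" "Suc i \<le> n" and t2: "\<sigma> i = i" "\<sigma> (Suc i) < i"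
  shows "\<sigma> \<circ> sref i \<in> NC n"
proof -
  obtain B where B: "B \<in> P" "i \<in> B" using part_ex[OF P, of i] i by auto
  obtain C where C: "C \<in> P" "Suc i \<in> C" using part_ex[OF P, of "Suc i"] i by auto
  have finB: "finite B" using part_basic[OF P B(1)] by auto
  have finC: "finite C" using part_basic[OF P C(1)] by auto
  have Bi: "B = {i}" using singleton_block[OF finB B(2)] pp_eq[OF P B] s t2 by simp
  have CB: "C \<noteq> B" using Bi C by auto
  define a where "a = pf C (Suc i)"
  have a: "a < i" "a \<in> C" using pp_eq[OF P C] s t2 pf_in[OF finC C(2)] by (auto simp: a_def)
  have nmin: "Suc i \<noteq> Min C"
  proof
    assume "Suc i = Min C"
    then have "a = Max C" using pf_min[OF finC C(2)] by (simp add: a_def)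
    then show False using a Max_ge[OF finC C(2)] by simp
  qed
  have amax: "\<And>y. y \<in> C \<Longrightarrow> y < Suc i \<Longrightarrow> y \<le> a"
    using pf_notmin(2)[OF finC C(2) nmin] by (simp add: a_def)
  have iC: "i \<notin> C" using part_uniq[OF P B(1) C(1)] B CB by auto
  define C' where "C' = insert i C"
  have finC': "finite C'" using finC by (simp add: C'_def)
  define P' where "P' = insert C' (P - {B, C})"
  have C'P: "C' \<in> P'" by (simp add: P'_def)
  have P': "partition_on {1..n} P'"
  proof (rule partition_onI)
    show "\<Union>P' = {1..n}" using P B C Bi unfolding P'_def C'_def partition_on_def by auto
    show "{} \<notin> P'" using P unfolding P'_def C'_def partition_on_def by auto
    fix p q assume pq: "p \<in> P'" "q \<in> P'" "p \<noteq> q"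
    have "disjnt D C'" if "D \<in> P - {B, C}" for D
      using that part_uniq[OF P, of D B i] part_uniq[OF P, of D C] B C
      unfolding C'_def disjnt_def by auto
    moreover have "disjnt D E" if "D \<in> P - {B, C}" "E \<in> P - {B, C}" "D \<noteq> E" for D E
      using that P unfolding partition_on_def disjoint_def disjnt_def by auto
    ultimately show "disjnt p q"
    proof -
      assume h1: "\<And>D. D \<in> P - {B, C} \<Longrightarrow> disjnt D C'"
        and h2: "\<And>D E. D \<in> P - {B, C} \<Longrightarrow> E \<in> P - {B, C} \<Longrightarrow> D \<noteq> E \<Longrightarrow> disjnt D E"
      have "p = C' \<or> p \<in> P - {B, C}" "q = C' \<or> q \<in> P - {B, C}" using pq by (auto simp: P'_def)
      then show ?thesis using h1 h2 pq(3) by (metis disjnt_sym)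
    qed
  qed
  have minC': "Min C' = Min C" "Max C' = Max C"
  proof -
    have "C \<noteq> {}" using C by auto
    moreover have "Min C \<le> a" using a finC by simp
    then have "min i (Min C) = Min C" using a by simp
    moreover have "Suc i \<le> Max C" using C finC by simp
    then have "max i (Max C) = Max C" by simp
    ultimately show "Min C' = Min C" "Max C' = Max C" using finC
      by (simp_all add: C'_def Min_insert Max_insert)
  qed
  have eq: "part_perm P' = \<sigma> \<circ> sref i"
  proof
    fix x
    show "part_perm P' x = (\<sigma> \<circ> sref i) x"
    proof (cases "x \<in> {1..n}")
      case False
      then have "x \<noteq> i" "x \<noteq> Suc i" using i by auto
      then show ?thesis using False pp_out2[OF P' False] pp_out2[OF P False] s
        by (simp add: sref_other)
    next
      case True
      then obtain D where D: "D \<in> P" "x \<in> D" using part_ex[OF P] by blast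
      show ?thesis
      proof (cases "D = B \<or> D = C")
        case False
        then have "D \<in> P'" unfolding P'_def using D by auto
        moreover have "x \<noteq> i" "x \<noteq> Suc i" using D B C False part_uniq[OF P] by metis+
        ultimately show ?thesis using pp_eq[OF P' _ D(2)] pp_eq[OF P D] s by (simp add: sref_other)
      next
        case DBC: True
        show ?thesis
        proof (cases "x = i")
          case True
          have "pf C' i = a"
            apply (rule pf_eq_iff[OF finC'])
            using a amax by (auto simp: C'_def) (metis less_SucI not_le)
          then show ?thesis using True pp_eq[OF P' C'P, of i] by (simp add: sref_def a_def C'_def s pp_eq[OF P C])
        next
          case xi: False
          then have xC: "x \<in> C" using DBC D Bi by auto
          show ?thesis
          proof (cases "x = Suc i")
            case True
            have "pf C' (Suc i) = i"
              by (rule pf_eq_iff[OF finC']) (auto simp: C'_def C)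
            then show ?thesis using True pp_eq[OF P' C'P, of "Suc i"] t2 C(2)
              by (simp add: sref_def C'_def)
          next
            case False
            have x'C: "x \<in> C'" by (simp add: C'_def xC)
            have "pf C' x = pf C x"
            proof (cases "x = Min C")
              case True
              then show ?thesis using pf_min[OF finC xC] pf_min[OF finC' x'C] minC' by simp
            next
              case nm: False
              have lt: "pf C x < x" and mx: "\<And>y. y \<in> C \<Longrightarrow> y < x \<Longrightarrow> y \<le> pf C x"
                and pC: "pf C x \<in> C"
                using pf_notmin[OF finC xC nm] pf_in[OF finC xC] by auto
              have "\<not> (pf C x < i \<and> i < x)"
              proof
                assume h: "pf C x < i \<and> i < x"
                then have "Suc i < x" using False by simp
                then have "Suc i \<le> pf C x" using mx C by simp
                then show False using h by simp
              qed
              then show ?thesis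
                apply (intro pf_eq_iff[OF finC'])
                using pC lt mx x'C by (auto simp: C'_def not_le[symmetric])
            qed
            then show ?thesis using pp_eq[OF P' C'P x'C] pp_eq[OF P C(1) xC] s xi False
              by (simp add: sref_other)
          qed
        qed
      qed
    qed
  qed
  have ncP': "noncrossing P'"
    unfolding noncrossing_def
  proof (rule notI, elim bexE exE conjE)
    fix X Y a b c d
    assume X: "X \<in> P'" and Y: "Y \<in> P'" and XY: "X \<noteq> Y" and abcd: "a \<in> X" "b \<in> X" "c \<in> Y" "d \<in> Y" "a < c" "c < b" "b < d"
    define h where "h Z = (if Z = C' then C else Z)" for Z
    define f where "f Z z = (if Z = C' \<and> z = i then Suc i else z)" for Z z
    have hP: "h Z \<in> P" "z \<in> Z \<Longrightarrow> f Z z \<in> h Z"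
      if "Z \<in> P'" for Z z
      using that C B unfolding h_def f_def P'_def C'_def by auto
    have notin: "z \<noteq> i" "z \<noteq> Suc i" if "Z \<in> P'" "Z \<noteq> C'" "z \<in> Z" for Z z
      using that part_uniq[OF P, of Z B i] part_uniq[OF P, of Z C "Suc i"] B C
      unfolding P'_def by auto
    have "h X \<noteq> h Y" using X Y XY C B CB iC unfolding h_def P'_def C'_def by auto
    moreover have ord: "(u < v \<longleftrightarrow> f Z u < f W v)" if "Z \<in> P'" "W \<in> P'" "Z \<noteq> W" "u \<in> Z" "v \<in> W" for Z W u v
    proof -
      show ?thesis
      proof (cases "Z = C'")
        case True
        then have "W \<noteq> C'" using that by auto
        then have "v \<noteq> i" "v \<noteq> Suc i" "f W v = v" using notin[OF that(2) _ that(5)] by (auto simp: f_def)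
        then show ?thesis by (auto simp: f_def)
      next
        case False
        then have "u \<noteq> i" "u \<noteq> Suc i" "f Z u = u" using notin[OF that(1) _ that(4)] by (auto simp: f_def)
        then show ?thesis by (auto simp: f_def)
      qed
    qed
    have "f X a < f Y c" "f Y c < f X b" "f X b < f Y d"
      using ord[OF X Y XY abcd(1,3)] ord[OF Y X XY[symmetric] abcd(3,2)] ord[OF X Y XY abcd(2,4)] abcd by auto
    moreover have "f X a \<in> h X" "f X b \<in> h X" "f Y c \<in> h Y" "f Y d \<in> h Y"
      using hP(2)[OF X] hP(2)[OF Y] abcd by auto
    ultimately have "\<exists>B\<in>P. \<exists>C\<in>P. B \<noteq> C \<and> (\<exists>a b c d. a \<in> B \<and> b \<in> B \<and> c \<in> C \<and> d \<in> C \<and> a < c \<and> c < b \<and> b < d)"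
      using hP(1)[OF X] hP(1)[OF Y] by (intro bexI[of _ "h X"] bexI[of _ "h Y"] conjI exI[of _ "f X a"] exI[of _ "f X b"] exI[of _ "f Y c"] exI[of _ "f Y d"]) simp_all
    then show False using ncP unfolding noncrossing_def by blast
  qed
  show ?thesis unfolding NC_def mem_Collect_eq using P' ncP' eq by (intro exI[of _ P']) simp
qed

lemma pf_invariant:
  assumes finB: "finite B" and S: "S \<subseteq> B" "S \<noteq> {}" and inv: "\<And>y. y \<in> S \<Longrightarrow> pf B y \<in> S"
  shows "S = B"
proof (rule ccontr)
  assume ne: "S \<noteq> B"
  have finS: "finite S" using finB S finite_subset by blast
  have mS: "Min S \<in> S" using finS S by simp
  have "Min S = Min B"
  proof (rule ccontr)
    assume "Min S \<noteq> Min B"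
    then have "pf B (Min S) < Min S" using pf_notmin(1)[OF finB] mS S by auto
    moreover have "pf B (Min S) \<in> S" using inv mS by simp
    ultimately show False using finS by (metis Min_le not_le)
  qed
  then have MB: "Max B \<in> S" using inv[OF mS] pf_min[OF finB] mS S by auto
  obtain x where x: "x \<in> B" "x \<notin> S" using ne S by auto
  have "x \<le> Max B" using finB x by simp
  then have xl: "x < Max B" using MB x by (metis le_neq_implies_less)
  define U where "U = {y \<in> S. x < y}"
  have U: "finite U" "U \<noteq> {}" using finS MB xl by (auto simp: U_def)
  define t where "t = Min U"
  have t: "t \<in> S" "x < t" using Min_in[OF U] by (auto simp: t_def U_def)
  have tB: "t \<in> B" using t S by auto
  have "Min B \<le> x" using finB x by simp
  then have "t \<noteq> Min B" using t by simp
  then have "pf B t < t" "x \<le> pf B t" using pf_notmin[OF finB tB] x t by auto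
  moreover have "pf B t \<in> S" using inv t by simp
  moreover have "x \<noteq> pf B t" using x \<open>pf B t \<in> S\<close> by auto
  ultimately have "pf B t \<in> U" by (auto simp: U_def)
  then have "t \<le> pf B t" using U by (simp add: t_def)
  then show False using \<open>pf B t < t\<close> by simp
qed

lemma NC_obtain:
  assumes "\<sigma> \<in> NC n"
  obtains P where "partition_on {1..n} P" "noncrossing P" "\<sigma> = part_perm P"
  using assms unfolding NC_def by blast

lemma same_block_succ:
  assumes P: "partition_on {1..n} P" and B: "B \<in> P" "i \<in> B" "Suc i \<in> B"
  shows "part_perm P (Suc i) = i"
  using pp_eq[OF P B(1,3)] pf_eq_iff[OF part_basic(1)[OF P B(1)] B(2,3)] by simp

lemma desc_neq:
  assumes "\<sigma> \<in> NC n" "1 \<le> i" "Suc i \<le> n"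
  shows "\<sigma> i \<noteq> \<sigma> (Suc i)"
proof
  assume eqv: "\<sigma> i = \<sigma> (Suc i)"
  obtain P where P: "partition_on {1..n} P" "noncrossing P" "\<sigma> = part_perm P"
    using NC_obtain[OF assms(1)] .
  obtain B where B: "B \<in> P" "i \<in> B" using part_ex[OF P(1), of i] assms by auto
  obtain C where C: "C \<in> P" "Suc i \<in> C" using part_ex[OF P(1), of "Suc i"] assms by auto
  have "\<sigma> i \<in> B" "\<sigma> (Suc i) \<in> C" using pp_in[OF P(1) B] pp_in[OF P(1) C] P(3) by auto
  then have "B = C" using part_uniq[OF P(1) B(1) C(1)] eqv by simp
  then have "\<sigma> (Suc i) = i" using same_block_succ[OF P(1) B] C P(3) by simp
  then have "pf B i = i" using pp_eq[OF P(1) B] P(3) eqv by simp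
  then have "B = {i}" using singleton_block[OF part_basic(1)[OF P(1) B(1)] B(2)] by simp
  then show False using C \<open>B = C\<close> by simp
qed

lemma desc_lt:
  assumes "\<sigma> \<in> NC n" "1 \<le> i" "Suc i \<le> n" "perm_len n (\<sigma> \<circ> sref i) < perm_len n \<sigma>"
  shows "\<sigma> (Suc i) < \<sigma> i"
proof (rule ccontr)
  assume "\<not> \<sigma> (Suc i) < \<sigma> i"
  then have lt: "\<sigma> i < \<sigma> (Suc i)" using desc_neq[OF assms(1-3)] by simp
  have "(\<sigma> \<circ> sref i) (Suc i) < (\<sigma> \<circ> sref i) i" using lt by (simp add: sref_def)
  from LL[OF assms(2,3) this] have "perm_len n (\<sigma> \<circ> sref i \<circ> sref i) + 1 = perm_len n (\<sigma> \<circ> sref i)" .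
  then have "perm_len n \<sigma> + 1 = perm_len n (\<sigma> \<circ> sref i)" by (simp add: sref_def comp_assoc)
  then show False using assms(4) by simp
qed

lemma char_dir1:
  assumes s: "\<sigma> \<in> NC n" and i: "1 \<le> i" "Suc i \<le> n" and d: "nc_descent n \<sigma> i"
  shows "T \<sigma> i"
proof -
  have lt: "\<sigma> (Suc i) < \<sigma> i" using desc_lt[OF s i] d by (simp add: nc_descent_def)
  obtain P where P: "partition_on {1..n} P" "noncrossing P" "\<sigma> = part_perm P"
    using NC_obtain[OF s] .
  obtain P' where P': "partition_on {1..n} P'" "noncrossing P'" "\<sigma> \<circ> sref i = part_perm P'"
    using NC_obtain[of "\<sigma> \<circ> sref i" n] d by (auto simp: nc_descent_def)
  obtain B where B: "B \<in> P" "i \<in> B" using part_ex[OF P(1), of i] i by auto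
  obtain C where C: "C \<in> P" "Suc i \<in> C" using part_ex[OF P(1), of "Suc i"] i by auto
  have finB: "finite B" using part_basic[OF P(1) B(1)] by simp
  show ?thesis
  proof (cases "B = C")
    case True
    then have "\<sigma> (Suc i) = i" using same_block_succ[OF P(1) B] C P(3) by simp
    then show ?thesis using lt by (simp add: T_def)
  next
    case BC: False
    show ?thesis
    proof (cases "\<sigma> i = i")
      case True
      then show ?thesis using lt by (simp add: T_def)
    next
      case False
      define \<tau> where "\<tau> = \<sigma> \<circ> sref i"
      obtain C' where C': "C' \<in> P'" "Suc i \<in> C'" using part_ex[OF P'(1), of "Suc i"] i by auto
      have "\<tau> (Suc i) \<in> C'" using pp_in[OF P'(1) C'] P'(3) by (simp add: \<tau>_def)
      then have siC': "\<sigma> i \<in> C'" by (simp add: \<tau>_def sref_def)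
      have SiB: "Suc i \<notin> B" using part_uniq[OF P(1) B(1) C(1)] C BC by auto
      have "i \<in> C'"
      proof (rule ccontr)
        assume iC': "i \<notin> C'"
        define S where "S = B \<inter> C'"
        have "S \<subseteq> B" by (simp add: S_def)
        moreover have "S \<noteq> {}" using siC' pp_in[OF P(1) B] P(3) by (auto simp: S_def)
        moreover have "pf B y \<in> S" if y: "y \<in> S" for y
        proof -
          have yi: "y \<noteq> i" "y \<noteq> Suc i" using y iC' SiB by (auto simp: S_def)
          have "\<tau> y = \<sigma> y" using yi by (simp add: \<tau>_def sref_other)
          moreover have "\<tau> y \<in> C'" using pp_in[OF P'(1) C'(1)] y P'(3) by (auto simp: S_def \<tau>_def)
          moreover have "\<sigma> y = pf B y" using pp_eq[OF P(1) B(1)] y P(3) by (auto simp: S_def)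
          ultimately show ?thesis using pf_in[OF finB] y by (auto simp: S_def)
        qed
        ultimately have "S = B" by (rule pf_invariant[OF finB])
        then show False using B iC' by (auto simp: S_def)
      qed
      then have "part_perm P' (Suc i) = i" using same_block_succ[OF P'(1) C'(1) _ C'(2)] by simp
      then have "\<sigma> i = i" using P'(3) by (metis comp_apply sref_def transpose_apply_second)
      then show ?thesis using False by simp
    qed
  qed
qed

lemma char:
  assumes s: "\<sigma> \<in> NC n" and i: "1 \<le> i" "Suc i \<le> n"
  shows "nc_descent n \<sigma> i \<longleftrightarrow> T \<sigma> i"
proof
  assume "nc_descent n \<sigma> i" then show "T \<sigma> i" using char_dir1[OF s i] by simp
next
  assume t: "T \<sigma> i"
  obtain P where P: "partition_on {1..n} P" "noncrossing P" "\<sigma> = part_perm P"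
    using NC_obtain[OF s] .
  have "\<sigma> \<circ> sref i \<in> NC n" using t T1_nc[OF P i] T2_nc[OF P i] by (auto simp: T_def)
  moreover have "\<sigma> (Suc i) < \<sigma> i" using t by (auto simp: T_def)
  then have "perm_len n (\<sigma> \<circ> sref i) + 1 = perm_len n \<sigma>" by (rule LL[OF i])
  ultimately show "nc_descent n \<sigma> i" by (simp add: nc_descent_def)
qed

lemma second_elem:
  fixes B :: "nat set"
  assumes "finite B" "y \<in> B" "y \<noteq> Min B"
  obtains s where "s \<in> B" "Min B < s" "\<And>z. z \<in> B \<Longrightarrow> Min B < z \<Longrightarrow> s \<le> z"
proof -
  define U where "U = B - {Min B}"
  have U: "finite U" "U \<noteq> {}" using assms by (auto simp: U_def)
  have "Min U \<in> B" "Min U \<noteq> Min B" using Min_in[OF U] by (auto simp: U_def)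
  moreover then have "Min B < Min U" using Min_le[OF assms(1) \<open>Min U \<in> B\<close>] by linarith
  moreover have "\<And>z. z \<in> B \<Longrightarrow> Min B < z \<Longrightarrow> Min U \<le> z" using U by (auto simp: U_def)
  ultimately show ?thesis using that by blast
qed

lemma exist_gap:
  assumes P: "partition_on {1..n} P" and ncP: "noncrossing P" and s: "\<sigma> = part_perm P"
  shows "B \<in> P \<Longrightarrow> t \<in> B \<Longrightarrow> Min B < t \<Longrightarrow> (\<And>z. z \<in> B \<Longrightarrow> Min B < z \<Longrightarrow> t \<le> z)
    \<Longrightarrow> \<exists>i. 1 \<le> i \<and> Suc i \<le> n \<and> T \<sigma> i"
proof (induction "t - Min B" arbitrary: B t rule: less_induct)
  case less
  define m where "m = Min B"
  have finB: "finite B" using part_basic[OF P less(2)] by simp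
  have mB: "m \<in> B" unfolding m_def using finB less(3) by (intro Min_in) auto
  have Bn: "B \<subseteq> {1..n}" using part_basic[OF P less(2)] by simp
  have nb: "\<And>z. z \<in> B \<Longrightarrow> m < z \<Longrightarrow> z < t \<Longrightarrow> False" using less(5) m_def by fastforce
  have sm: "pf B t = m" using pf_eq_iff[OF finB mB less(3)] less(4) nb m_def by blast
  have m1: "1 \<le> m" "t \<le> n" using Bn mB less(3) by auto
  show ?case
  proof (cases "t = Suc m")
    case True
    have "\<sigma> (Suc m) = m" using pp_eq[OF P less(2,3)] s sm True by simp
    moreover have "\<sigma> m = Max B" using pp_eq[OF P less(2) mB] pf_min[OF finB mB] s m_def by simp
    moreover have "t \<le> Max B" using finB less(3) by simp
    ultimately have "T \<sigma> m" using True by (simp add: T_def)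
    then show ?thesis using m1 True by blast
  next
    case False
    define i where "i = t - 1"
    have i: "m < i" "Suc i = t" using False less(4) by (auto simp: i_def m_def)
    then have iN: "i \<in> {1..n}" using m1 by auto
    obtain D where D: "D \<in> P" "i \<in> D" using part_ex[OF P iN] by blast
    have finD: "finite D" using part_basic[OF P D(1)] by simp
    have DB: "D \<noteq> B" using D nb i by auto
    have disj: "\<And>z. z \<in> D \<Longrightarrow> z \<notin> B" using part_uniq[OF P D(1) less(2)] DB by auto
    show ?thesis
    proof (cases "D = {i}")
      case True
      have "\<sigma> i = i" using pp_eq[OF P D] s True by (simp add: pf_def)
      moreover have "\<sigma> (Suc i) = m" using pp_eq[OF P less(2,3)] s sm i by simp
      ultimately have "T \<sigma> i" using i by (simp add: T_def)
      then show ?thesis using i iN m1 by (intro exI[of _ i]) simp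
    next
      case False
      then obtain e where e: "e \<in> D" "e \<noteq> i" using D by auto
      have inside: "m < z \<and> z < t" if z: "z \<in> D" for z
      proof -
        have "z \<noteq> m" "z \<noteq> t" using disj[OF z] mB less(3) by auto
        moreover have "\<not> z < m"
        proof
          assume "z < m"
          then have "\<exists>X\<in>P. \<exists>Y\<in>P. X \<noteq> Y \<and> (\<exists>a b c d. a \<in> X \<and> b \<in> X \<and> c \<in> Y \<and> d \<in> Y \<and> a < c \<and> c < b \<and> b < d)"
            using D less(2,3) DB mB i z
            by (intro bexI[of _ D] bexI[of _ B] conjI exI[of _ z] exI[of _ i] exI[of _ m] exI[of _ t]) auto
          then show False using ncP unfolding noncrossing_def by blast
        qed
        moreover have "\<not> t < z"
        proof
          assume "t < z"
          then have "\<exists>X\<in>P. \<exists>Y\<in>P. X \<noteq> Y \<and> (\<exists>a b c d. a \<in> X \<and> b \<in> X \<and> c \<in> Y \<and> d \<in> Y \<and> a < c \<and> c < b \<and> b < d)"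
            using D less(2,3) DB mB i z
            by (intro bexI[of _ B] bexI[of _ D] conjI exI[of _ m] exI[of _ t] exI[of _ i] exI[of _ z]) auto
          then show False using ncP unfolding noncrossing_def by blast
        qed
        ultimately show ?thesis by auto
      qed
      have "\<exists>y\<in>D. y \<noteq> Min D" using e D by metis
      then obtain y where y: "y \<in> D" "y \<noteq> Min D" by blast
      obtain t' where t': "t' \<in> D" "Min D < t'" "\<And>z. z \<in> D \<Longrightarrow> Min D < z \<Longrightarrow> t' \<le> z"
        using second_elem[OF finD y] by blast
      have "Min D \<in> D" using finD D by (intro Min_in) auto
      then have "t' - Min D < t - Min B" using inside[OF t'(1)] inside[of "Min D"] t'(2) m_def by auto
      then show ?thesis using less(1)[OF _ D(1) t'] by blast
    qed
  qed
qed

lemma exist_T: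
  assumes s: "\<sigma> \<in> NC n" and ne: "\<sigma> \<noteq> id"
  shows "\<exists>i. 1 \<le> i \<and> Suc i \<le> n \<and> T \<sigma> i"
proof -
  obtain P where P: "partition_on {1..n} P" "noncrossing P" "\<sigma> = part_perm P"
    using NC_obtain[OF s] .
  have "\<exists>B\<in>P. \<exists>y\<in>B. y \<noteq> Min B"
  proof (rule ccontr)
    assume h: "\<not> (\<exists>B\<in>P. \<exists>y\<in>B. y \<noteq> Min B)"
    have "\<sigma> x = x" for x
    proof (cases "x \<in> {1..n}")
      case True
      then obtain B where B: "B \<in> P" "x \<in> B" using part_ex[OF P(1)] by blast
      then have "B = {x}" using h part_basic[OF P(1) B(1)] by (metis empty_iff insertE insertI1 subsetI subset_antisym) 
      then show ?thesis using pp_eq[OF P(1) B] P(3) by (simp add: pf_def)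
    next
      case False then show ?thesis using pp_out2[OF P(1) False] P(3) by simp
    qed
    then show False using ne by auto
  qed
  then obtain B y where B: "B \<in> P" "y \<in> B" "y \<noteq> Min B" by blast
  obtain t where "t \<in> B" "Min B < t" "\<And>z. z \<in> B \<Longrightarrow> Min B < z \<Longrightarrow> t \<le> z"
    using second_elem[OF part_basic(1)[OF P(1) B(1)] B(2,3)] by blast
  then show ?thesis using exist_gap[OF P B(1)] by blast
qed

lemma word_perm_snoc: "word_perm (u @ [i]) = word_perm u \<circ> sref i"
  by (induction u) (simp_all add: comp_assoc)

lemma sref_sref: "f \<circ> sref i \<circ> sref i = f"
  by (simp add: sref_def comp_assoc)

lemma sref_comm: "i + 1 < j \<or> j + 1 < i \<Longrightarrow> f \<circ> sref i \<circ> sref j = f \<circ> sref j \<circ> sref i"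
  by (auto simp: sref_def fun_eq_iff transpose_def)

lemma perm_len_id: "perm_len n id = 0"
proof -
  have "{(i::nat, j). 1 \<le> i \<and> i < j \<and> j \<le> n \<and> j < i} = {}" by auto
  then show ?thesis unfolding perm_len_def id_def by (metis card.empty)
qed

lemma RedNC_nil: "[] \<in> RedNC n \<sigma> \<longleftrightarrow> \<sigma> = id"
  by (auto simp: RedNC_def Red_def perm_len_id)

lemma RedNC_len: "w \<in> RedNC n \<sigma> \<Longrightarrow> length w = perm_len n \<sigma>"
  by (simp add: RedNC_def Red_def)

lemma RedNC_snoc:
  assumes s: "\<sigma> \<in> NC n"
  shows "u @ [i] \<in> RedNC n \<sigma> \<longleftrightarrow> 1 \<le> i \<and> Suc i \<le> n \<and> T \<sigma> i \<and> u \<in> RedNC n (\<sigma> \<circ> sref i)"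
proof
  assume w: "u @ [i] \<in> RedNC n \<sigma>"
  then have i: "1 \<le> i" "Suc i \<le> n" by (auto simp: RedNC_def Red_def)
  have wp: "word_perm u = \<sigma> \<circ> sref i"
    using w by (auto simp: RedNC_def Red_def word_perm_snoc) (metis sref_sref)
  have "nc_descent n (word_perm (take (length (u @ [i])) (u @ [i]))) ((u @ [i]) ! (length (u @ [i]) - 1))"
    using w unfolding RedNC_def by auto
  then have nd: "nc_descent n \<sigma> i" using w by (simp add: RedNC_def Red_def)
  then have t: "T \<sigma> i" using char[OF s i] by simp
  have "perm_len n (\<sigma> \<circ> sref i) + 1 = perm_len n \<sigma>" using LL[OF i] t by (auto simp: T_def)
  then have len: "length u = perm_len n (\<sigma> \<circ> sref i)" using w by (simp add: RedNC_def Red_def)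
  have pre: "word_perm (take k u) \<in> NC n \<and> nc_descent n (word_perm (take k u)) (u ! (k - 1))"
    if "1 \<le> k" "k \<le> length u" for k
  proof -
    have "take k (u @ [i]) = take k u" "(u @ [i]) ! (k - 1) = u ! (k - 1)" using that
      by (auto simp: nth_append)
    then show ?thesis using w that unfolding RedNC_def by (metis (no_types, lifting) length_append_singleton le_SucI mem_Collect_eq)
  qed
  have "u \<in> Red n (\<sigma> \<circ> sref i)" using w wp len by (auto simp: RedNC_def Red_def)
  then have "u \<in> RedNC n (\<sigma> \<circ> sref i)" using pre unfolding RedNC_def by blast
  then show "1 \<le> i \<and> Suc i \<le> n \<and> T \<sigma> i \<and> u \<in> RedNC n (\<sigma> \<circ> sref i)" using i t by simp
next
  assume h: "1 \<le> i \<and> Suc i \<le> n \<and> T \<sigma> i \<and> u \<in> RedNC n (\<sigma> \<circ> sref i)"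
  then have i: "1 \<le> i" "Suc i \<le> n" and t: "T \<sigma> i" and u: "u \<in> RedNC n (\<sigma> \<circ> sref i)" by auto
  have nd: "nc_descent n \<sigma> i" using char[OF s i] t by simp
  have "perm_len n (\<sigma> \<circ> sref i) + 1 = perm_len n \<sigma>" using LL[OF i] t by (auto simp: T_def)
  then have len: "length (u @ [i]) = perm_len n \<sigma>" using u by (simp add: RedNC_def Red_def)
  have wp: "word_perm (u @ [i]) = \<sigma>" using u by (simp add: RedNC_def Red_def word_perm_snoc sref_sref)
  have "u @ [i] \<in> Red n \<sigma>" using u i len wp by (auto simp: RedNC_def Red_def)
  moreover have "word_perm (take k (u @ [i])) \<in> NC n \<and> nc_descent n (word_perm (take k (u @ [i]))) ((u @ [i]) ! (k - 1))"
    if "1 \<le> k" "k \<le> length (u @ [i])" for k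
  proof (cases "k = length (u @ [i])")
    case True
    then show ?thesis using wp s nd by simp
  next
    case False
    then have "k \<le> length u" using that by simp
    moreover have "take k (u @ [i]) = take k u" "(u @ [i]) ! (k - 1) = u ! (k - 1)" using that False
      by (auto simp: nth_append)
    ultimately show ?thesis using u that unfolding RedNC_def by auto
  qed
  ultimately show "u @ [i] \<in> RedNC n \<sigma>" unfolding RedNC_def by blast
qed

lemma T_transfer: "i + 1 < j \<or> j + 1 < i \<Longrightarrow> T (\<sigma> \<circ> sref j) i \<longleftrightarrow> T \<sigma> i"
  by (auto simp: T_def sref_def transpose_def)

lemma T_adj: "T \<sigma> i \<Longrightarrow> T \<sigma> (Suc i) \<Longrightarrow> False"
  unfolding T_def by (elim disjE conjE; linarith)

lemma T_far:
  assumes "T \<sigma> i" "T \<sigma> j" "i \<noteq> j"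
  shows "i + 1 < j \<or> j + 1 < i"
proof (rule ccontr)
  assume "\<not> (i + 1 < j \<or> j + 1 < i)"
  then have "j = Suc i \<or> i = Suc j" using assms(3) by arith
  then show False using T_adj[of \<sigma> i] T_adj[of \<sigma> j] assms by blast
qed

lemma NC_step: "\<sigma> \<in> NC n \<Longrightarrow> 1 \<le> i \<Longrightarrow> Suc i \<le> n \<Longrightarrow> T \<sigma> i \<Longrightarrow> \<sigma> \<circ> sref i \<in> NC n"
  using char[of \<sigma> n i] by (simp add: nc_descent_def)

lemma nonempty:
  assumes "\<sigma> \<in> NC n"
  shows "\<exists>w. w \<in> RedNC n \<sigma>"
  using assms
proof (induction "perm_len n \<sigma>" arbitrary: \<sigma> rule: less_induct)
  case less
  show ?case
  proof (cases "\<sigma> = id")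
    case True then show ?thesis using RedNC_nil by blast
  next
    case False
    then obtain i where i: "1 \<le> i" "Suc i \<le> n" "T \<sigma> i" using exist_T[OF less(2)] by blast
    have nc: "\<sigma> \<circ> sref i \<in> NC n" using NC_step[OF less(2) i] .
    have "perm_len n (\<sigma> \<circ> sref i) + 1 = perm_len n \<sigma>" using LL[OF i(1,2)] i(3) by (auto simp: T_def)
    then obtain u where "u \<in> RedNC n (\<sigma> \<circ> sref i)" using less(1)[OF _ nc] by fastforce
    then have "u @ [i] \<in> RedNC n \<sigma>" using RedNC_snoc[OF less(2)] i by blast
    then show ?thesis by blast
  qed
qed

lemma comm_append: "comm_move\<^sup>*\<^sup>* u v \<Longrightarrow> comm_move\<^sup>*\<^sup>* (u @ c) (v @ c)"
proof (induction rule: rtranclp_induct)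
  case base then show ?case by simp
next
  case (step y z)
  then have "comm_move (y @ c) (z @ c)" unfolding comm_move_def by fastforce
  then show ?case by (rule rtranclp.rtrancl_into_rtrancl[OF step(3)])
qed

lemma conn:
  "length w0 = m \<Longrightarrow> \<sigma> \<in> NC n \<Longrightarrow> w0 \<in> RedNC n \<sigma> \<Longrightarrow> w \<in> RedNC n \<sigma> \<Longrightarrow> comm_move\<^sup>*\<^sup>* w0 w"
proof (induction m arbitrary: \<sigma> w0 w)
  case 0
  then have "w0 = []" by simp
  then have "\<sigma> = id" using 0 RedNC_nil by blast
  then have "length w = 0" using RedNC_len[OF 0(4)] perm_len_id by metis
  then have "w = []" by simp
  then show ?case using \<open>w0 = []\<close> by simp
next
  case (Suc m)
  have "length w = Suc m" using RedNC_len[OF Suc(4)] RedNC_len[OF Suc(5)] Suc(2) by simp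
  then obtain u j where w: "w = u @ [j]" by (metis length_Suc_conv_rev)
  obtain u0 i where w0: "w0 = u0 @ [i]" using Suc(2) by (metis length_Suc_conv_rev)
  have s: "\<sigma> \<in> NC n" by fact
  have hi: "1 \<le> i" "Suc i \<le> n" "T \<sigma> i" "u0 \<in> RedNC n (\<sigma> \<circ> sref i)"
    using Suc(4) RedNC_snoc[OF s] w0 by auto
  have hj: "1 \<le> j" "Suc j \<le> n" "T \<sigma> j" "u \<in> RedNC n (\<sigma> \<circ> sref j)"
    using Suc(5) RedNC_snoc[OF s] w by auto
  have ncI: "\<sigma> \<circ> sref i \<in> NC n" using NC_step[OF s hi(1-3)] .
  have ncJ: "\<sigma> \<circ> sref j \<in> NC n" using NC_step[OF s hj(1-3)] .
  have lu0: "length u0 = m" using Suc(2) w0 by simp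
  show ?case
  proof (cases "i = j")
    case True
    have "u \<in> RedNC n (\<sigma> \<circ> sref i)" using hj(4) True by simp
    then have "comm_move\<^sup>*\<^sup>* u0 u" using Suc.IH[OF lu0 ncI hi(4)] by blast
    then show ?thesis using comm_append w w0 True by blast
  next
    case False
    have far: "i + 1 < j \<or> j + 1 < i" using T_far[OF hi(3) hj(3) False] .
    have far': "j + 1 < i \<or> i + 1 < j" using far by auto
    have tIj: "T (\<sigma> \<circ> sref i) j" using T_transfer[OF far'] hj(3) by simp
    have tJi: "T (\<sigma> \<circ> sref j) i" using T_transfer[OF far] hi(3) by simp
    have ncR: "\<sigma> \<circ> sref i \<circ> sref j \<in> NC n" using NC_step[OF ncI hj(1,2) tIj] .
    obtain v where v: "v \<in> RedNC n (\<sigma> \<circ> sref i \<circ> sref j)" using nonempty[OF ncR] by blast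
    have v2: "v \<in> RedNC n (\<sigma> \<circ> sref j \<circ> sref i)" using v unfolding sref_comm[OF far] .
    have vj: "v @ [j] \<in> RedNC n (\<sigma> \<circ> sref i)" using RedNC_snoc[OF ncI] hj(1,2) tIj v by blast
    have vi: "v @ [i] \<in> RedNC n (\<sigma> \<circ> sref j)" using RedNC_snoc[OF ncJ] hi(1,2) tJi v2 by blast
    have c1: "comm_move\<^sup>*\<^sup>* u0 (v @ [j])" using Suc.IH[OF lu0 ncI hi(4) vj] .
    have "length (v @ [i]) = m" using RedNC_len[OF vi] RedNC_len[OF hj(4)] \<open>length w = Suc m\<close> w by simp
    then have c2: "comm_move\<^sup>*\<^sup>* (v @ [i]) u" using Suc.IH[OF _ ncJ vi hj(4)] by simp
    have c3: "comm_move (v @ [j, i]) (v @ [i, j])"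
      unfolding comm_move_def using far by (intro exI[of _ v] exI[of _ "[]"] exI[of _ j] exI[of _ i]) auto
    have "comm_move\<^sup>*\<^sup>* w0 (v @ [j, i])" using comm_append[OF c1, of "[i]"] w0 by simp
    also have "comm_move\<^sup>*\<^sup>* (v @ [j, i]) (v @ [i, j])" using c3 by blast
    also have "comm_move\<^sup>*\<^sup>* (v @ [i, j]) w" using comm_append[OF c2, of "[j]"] w by simp
    finally show ?thesis .
  qed
qed

lemma closure1:
  assumes "i + 1 < j \<or> j + 1 < i"
  shows "\<sigma> \<in> NC n \<Longrightarrow> a @ [i, j] @ b \<in> RedNC n \<sigma> \<Longrightarrow> a @ [j, i] @ b \<in> RedNC n \<sigma>"
proof (induction b arbitrary: \<sigma> rule: rev_induct)
  case Nil
  have s: "\<sigma> \<in> NC n" by fact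
  have "(a @ [i]) @ [j] \<in> RedNC n \<sigma>" using Nil by simp
  then have hj: "1 \<le> j" "Suc j \<le> n" "T \<sigma> j" "a @ [i] \<in> RedNC n (\<sigma> \<circ> sref j)"
    using iffD1[OF RedNC_snoc[OF s]] by blast+
  have ncJ: "\<sigma> \<circ> sref j \<in> NC n" using NC_step[OF s hj(1-3)] .
  have hi: "1 \<le> i" "Suc i \<le> n" "T (\<sigma> \<circ> sref j) i" "a \<in> RedNC n (\<sigma> \<circ> sref j \<circ> sref i)"
    using iffD1[OF RedNC_snoc[OF ncJ] hj(4)] by blast+
  have ti: "T \<sigma> i" using T_transfer[OF assms] hi(3) by simp
  have ncI: "\<sigma> \<circ> sref i \<in> NC n" using NC_step[OF s hi(1,2) ti] .
  have far': "j + 1 < i \<or> i + 1 < j" using assms by auto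
  have tIj: "T (\<sigma> \<circ> sref i) j" using T_transfer[OF far'] hj(3) by simp
  have "a \<in> RedNC n (\<sigma> \<circ> sref i \<circ> sref j)" using hi(4) unfolding sref_comm[OF assms] .
  then have "a @ [j] \<in> RedNC n (\<sigma> \<circ> sref i)" using RedNC_snoc[OF ncI] hj(1,2) tIj by blast
  then have "(a @ [j]) @ [i] \<in> RedNC n \<sigma>" using RedNC_snoc[OF s] hi(1,2) ti by blast
  then show ?case by simp
next
  case (snoc k b)
  have s: "\<sigma> \<in> NC n" by fact
  have "(a @ [i, j] @ b) @ [k] \<in> RedNC n \<sigma>" using snoc by simp
  then have hk: "1 \<le> k" "Suc k \<le> n" "T \<sigma> k" "a @ [i, j] @ b \<in> RedNC n (\<sigma> \<circ> sref k)"
    using iffD1[OF RedNC_snoc[OF s]] by blast+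
  have ncK: "\<sigma> \<circ> sref k \<in> NC n" using NC_step[OF s hk(1-3)] .
  have "a @ [j, i] @ b \<in> RedNC n (\<sigma> \<circ> sref k)" using snoc.IH[OF ncK hk(4)] .
  then have "(a @ [j, i] @ b) @ [k] \<in> RedNC n \<sigma>" using RedNC_snoc[OF s] hk(1-3) by blast
  then show ?case by simp
qed

lemma closure:
  assumes "comm_move\<^sup>*\<^sup>* w0 w" "\<sigma> \<in> NC n" "w0 \<in> RedNC n \<sigma>"
  shows "w \<in> RedNC n \<sigma>"
  using assms(1)
proof (induction rule: rtranclp_induct)
  case base then show ?case using assms(3) .
next
  case (step y z)
  then obtain a b i j where "y = a @ [i, j] @ b" "z = a @ [j, i] @ b" "i + 1 < j \<or> j + 1 < i"
    unfolding comm_move_def by blast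
  then show ?case using closure1[of i j \<sigma> n a b] step(3) assms(2) by simp
qed

theorem proposition7p12:
  fixes n :: nat and \<sigma> :: "nat \<Rightarrow> nat"
  assumes "\<sigma> \<in> NC n"
  shows "RedNC n \<sigma> \<noteq> {} \<and>
         (\<forall>w0 \<in> RedNC n \<sigma>. \<forall>w. w \<in> RedNC n \<sigma> \<longleftrightarrow> comm_move\<^sup>*\<^sup>* w0 w)"
proof
  show "RedNC n \<sigma> \<noteq> {}" using nonempty[OF assms] by blast
  show "\<forall>w0 \<in> RedNC n \<sigma>. \<forall>w. w \<in> RedNC n \<sigma> \<longleftrightarrow> comm_move\<^sup>*\<^sup>* w0 w"
    using conn[OF refl assms] closure[OF _ assms] by blast
qed

end
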